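(* Let $f:[0,1]\to\mathbb{R}$ with $f(0),f(1)\in\mathbb{Z}$, and let $n\in\mathbb{N}_+$, $n\ge 3$. Set \[ \phi_n(x):=(n+1)\int_0^1 t(1-t)^{n(1-x)}\frac{(1-t)^{nx}-t^{nx}}{1-2t}\,dt,\quad x\in[0,1]. \] If $f(x)-\phi_n(x)$ is monotone increasing on $[0,1]$, then $\widetilde{B}_n(f)$ is monotone increasing on $[0,1]$.
   Context: For $n\in\mathbb{N}_+$ and $f:[0,1]\to\mathbb{R}$, $\widetilde{B}_n(f)(x):=\sum_{k=0}^n \left[f\left(\frac{k}{n}\right)\binom{n}{k}\right]x^k(1-x)^{n-k}$, where $[\alpha]$ is the largest integer $\le\alpha$. Monotone increasing is meant in the non-strict sense. *)

theory Defs
  imports "HOL-Analysis.Analysis"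
begin

definition Btilde :: "nat \<Rightarrow> (real \<Rightarrow> real) \<Rightarrow> real \<Rightarrow> real" where
  "Btilde n f x = (\<Sum>k=0..n. real_of_int \<lfloor>f (real k / real n) * real (n choose k)\<rfloor>
                      * x ^ k * (1 - x) ^ (n - k))"

text \<open>phi_n(x) = (n+1) * integral over [0,1] of
  t (1-t)^(n(1-x)) ((1-t)^(nx) - t^(nx)) / (1-2t) dt
  (real powers via powr; the points t = 1/2 and t = 1 are a null set).\<close>
definition phi :: "nat \<Rightarrow> real \<Rightarrow> real" where
  "phi n x = real (n + 1) * integral {0..1}
      (\<lambda>t. t * (1 - t) powr (real n * (1 - x))
           * ((1 - t) powr (real n * x) - t powr (real n * x)) / (1 - 2 * t))"

end

theory Submission
  imports Defs
begin

definition gg :: "nat \<Rightarrow> nat \<Rightarrow> real \<Rightarrow> real" where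
 "gg n m = (\<lambda>t. t * (1 - t) powr (real n * (1 - real m / real n))
           * ((1 - t) powr (real n * (real m / real n)) - t powr (real n * (real m / real n))) / (1 - 2 * t))"

lemma phi_gg: "n > 0 \<Longrightarrow> phi n (real m / real n) = real (n+1) * integral {0..1} (gg n m)"
  unfolding phi_def gg_def by simp

lemma pw1: assumes "0 < n" "m \<le> n" "0 < t" "t < 1"
  shows "(1 - t) powr (real n * (1 - real m / real n)) = (1-t)^(n-m)"
proof -
  have e1: "real n * (1 - real m / real n) = real (n-m)" using assms by (simp add: field_simps of_nat_diff)
  show ?thesis unfolding e1 using assms by (simp add: powr_realpow del: of_nat_diff)
qed

lemma pw2: assumes "0 < n" "0 < x"
  shows "x powr (real n * (real m / real n)) = x^m"
  using assms by (simp add: powr_realpow)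

lemma gg_eq:
  assumes "0 < n" "m \<le> n" "0 < t" "t < 1" "t \<noteq> 1/2"
  shows "gg n m t = t * (1-t)^(n-m) * (\<Sum>i<m. t^(m - Suc i)*(1-t)^i)"
proof -
  have e1: "real n * (1 - real m / real n) = real (n-m)" using assms by (simp add: field_simps of_nat_diff)
  have e2: "real n * (real m / real n) = real m" using assms by simp
  have d: "(1-t)^m - t^m = (1 - 2*t) * (\<Sum>i<m. t^(m - Suc i)*(1-t)^i)"
    using power_diff_sumr2[of "1-t" m t] by simp
  have nz: "1 - 2*t \<noteq> 0" using assms by auto
  have "0 < 1 - t" using assms by simp
  note q = pw2[OF assms(1) this]
  show ?thesis unfolding gg_def pw1[OF assms(1-4)] pw2[OF assms(1) assms(3)] q using assms nz
    by (simp add: d pw2)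
qed

lemma gg_diff:
  assumes "0 < n" "k < n" "0 < t" "t < 1" "t \<noteq> 1/2"
  shows "gg n (Suc k) t - gg n k t = t powr (real (k+2) - 1) * (1-t) powr (real (n-k) - 1)"
proof -
  have e1: "\<And>m. m \<le> n \<Longrightarrow> real n * (1 - real m / real n) = real (n-m)" using assms by (simp add: field_simps of_nat_diff)
  have e2: "\<And>m. real n * (real m / real n) = real m" using assms by simp
  have nz: "1 - 2*t \<noteq> 0" using assms by auto
  have a: "real (k+2) - 1 = real (k+1)" by simp
  have b: "real (n-k) - 1 = real (n - Suc k)" using assms by (simp add: of_nat_diff)
  have p: "(1-t)^(n-k) = (1-t) * (1-t)^(n - Suc k)" using assms
    by (metis Suc_diff_Suc power_Suc)
  have "gg n (Suc k) t - gg n k t = (t * (1-t)^(n - Suc k) * ((1-t)^(Suc k) - t^(Suc k))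
         - t * (1-t)^(n-k) * ((1-t)^k - t^k)) / (1 - 2*t)"
    using assms unfolding gg_def 
     pw1[of n k t, OF assms(1) less_imp_le[OF assms(2)] assms(3,4)] 
     pw1[of n "Suc k" t, OF assms(1) Suc_leI[OF assms(2)] assms(3,4)] pw2[OF assms(1) assms(3)]
     pw2[OF assms(1), of "1-t"]
    by (simp add: pw2 powr_realpow[of "1-t"] diff_divide_distrib del: of_nat_Suc)
  also have "\<dots> = (t^(k+1) * (1-t)^(n - Suc k) * (1 - 2*t)) / (1 - 2*t)"
    unfolding p by (simp add: algebra_simps)
  also have "\<dots> = t^(k+1) * (1-t)^(n - Suc k)" using nz by simp
  also have "\<dots> = t powr real (k+1) * (1-t) powr real (n - Suc k)"
    using powr_realpow[of t "k+1"] powr_realpow[of "1-t" "n - Suc k"] assms by simp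
  finally show ?thesis unfolding a b .
qed

lemma gg_int:
  assumes "0 < n" "m \<le> n"
  shows "gg n m integrable_on {0..1}"
proof (rule integrable_spike_finite[where S="{0, 1/2, 1}"])
  show "(\<lambda>t::real. t * (1-t)^(n-m) * (\<Sum>i<m. t^(m - Suc i)*(1-t)^i)) integrable_on {0..1}"
    apply (rule integrable_continuous_interval) apply (intro continuous_intros) done
  fix x assume "x \<in> {0..1::real} - {0, 1/2, 1}"
  then show "gg n m x = x * (1-x)^(n-m) * (\<Sum>i<m. x^(m - Suc i)*(1-x)^i)"
    using gg_eq[OF assms] by auto
qed auto

lemma Beta_nat:
  assumes "k < n"
  shows "real (n+1) * Beta (real (k+2)) (real (n-k)) = 1 / real (n choose Suc k)"
proof -
  have g1: "Gamma (real (k+2)) = fact (k+1)" using Gamma_fact[of "k+1"] by (simp add: add.commute)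
  have g2: "Gamma (real (n-k)) = fact (n - Suc k)" using Gamma_fact[of "n - Suc k"] assms
    by (simp add: add.commute of_nat_diff)
  have g3: "Gamma (real (k+2) + real (n-k)) = fact (n+1)" using Gamma_fact[of "n+1"] assms
    by (simp add: add.commute of_nat_diff)
  have c: "real (n choose Suc k) = fact n / (fact (Suc k) * fact (n - Suc k))"
    using binomial_fact[of "Suc k" n] assms by simp
  have f: "(fact (n+1)::real) = real (Suc n) * fact n" by simp
  show ?thesis unfolding Beta_def g1 g2 g3 c f
  proof -
    have aux: "\<And>a b m::real. a > 0 \<Longrightarrow> b > 0 \<Longrightarrow> m > 0 \<Longrightarrow> m*(b/(m*a)) = 1/(a/b)"
      by (simp add: field_simps)
    show "real (n + 1) * (fact (k + 1) * fact (n - Suc k) / (real (Suc n) * fact n)) =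
       1 / (fact n / (fact (Suc k) * fact (n - Suc k)))"
      using aux[of "fact n" "fact (Suc k) * fact (n - Suc k)" "real (n+1)"] by simp
  qed
qed

lemma phi_diff:
  assumes "0 < n" "k < n"
  shows "phi n (real (Suc k) / real n) - phi n (real k / real n) = 1 / real (n choose Suc k)"
proof -
  have i1: "gg n (Suc k) integrable_on {0..1}" using gg_int assms by simp
  have i2: "gg n k integrable_on {0..1}" using gg_int assms by simp
  have "integral {0..1} (gg n (Suc k)) - integral {0..1} (gg n k)
     = integral {0..1} (\<lambda>t. gg n (Suc k) t - gg n k t)"
    using integral_diff[OF i1 i2] by simp
  also have "\<dots> = integral {0..1} (\<lambda>t. t powr (real (k+2) - 1) * (1-t) powr (real (n-k) - 1))"
  proof (rule integral_spike[where S="{0, 1/2, 1}"])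
    show "negligible {0, 1/2, 1::real}" by simp
    fix x assume "x \<in> {0..1::real} - {0, 1/2, 1}"
    then show "x powr (real (k+2) - 1) * (1-x) powr (real (n-k) - 1) = gg n (Suc k) x - gg n k x"
      using gg_diff[OF assms] by auto
  qed
  also have "\<dots> = Beta (real (k+2)) (real (n-k))"
    using has_integral_Beta_real[of "real (k+2)" "real (n-k)"] assms by (simp add: integral_unique)
  finally show ?thesis using phi_gg[OF assms(1), of "Suc k"] phi_gg[OF assms(1), of k] Beta_nat[OF assms(2)]
    by (metis right_diff_distrib)
qed

lemma dterm: "((\<lambda>x. c * x^k * (1-x)^j) has_real_derivative
   (c * real k * x^(k-1) * (1-x)^j - c * x^k * real j * (1-x)^(j-1))) (at x)"
  by (auto intro!: derivative_eq_intros simp: algebra_simps)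

lemma bern_mono:
  fixes a :: "nat \<Rightarrow> real"
  assumes "\<And>k. k \<le> m \<Longrightarrow> a k * real (Suc m - k) \<le> a (Suc k) * real (Suc k)"
  shows "mono_on {0..1} (\<lambda>x. \<Sum>k=0..Suc m. a k * x^k * (1-x)^(Suc m - k))"
proof (rule mono_onI)
  define D where "D x = (\<Sum>k=0..Suc m. a k * real k * x^(k-1) * (1-x)^(Suc m - k)
     - a k * x^k * real (Suc m - k) * (1-x)^(Suc m - k - 1))" for x
  have der: "((\<lambda>x. \<Sum>k=0..Suc m. a k * x^k * (1-x)^(Suc m - k)) has_real_derivative D x) (at x)" for x
    unfolding D_def by (rule DERIV_sum) (rule dterm)
  have Deq: "D x = (\<Sum>k=0..m. (a (Suc k) * real (Suc k) - a k * real (Suc m - k)) * x^k * (1-x)^(m-k))" for x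
  proof -
    have s1: "(\<Sum>k=0..Suc m. a k * real k * x^(k-1) * (1-x)^(Suc m - k))
       = (\<Sum>k=0..m. a (Suc k) * real (Suc k) * x^k * (1-x)^(m-k))"
      by (subst sum.atLeast0_atMost_Suc_shift) simp
    have s2: "(\<Sum>k=0..Suc m. a k * x^k * real (Suc m - k) * (1-x)^(Suc m - k - 1))
       = (\<Sum>k=0..m. a k * x^k * real (Suc m - k) * (1-x)^(m-k))"
      by (subst sum.atLeast0_atMost_Suc) (auto intro!: sum.cong simp: Suc_diff_le)
    show ?thesis unfolding D_def sum_subtractf s1 s2
      by (simp add: algebra_simps sum_subtractf[symmetric])
  qed
  have Dnn: "0 \<le> D x" if "0 \<le> x" "x \<le> 1" for x
    unfolding Deq using that assms by (intro sum_nonneg mult_nonneg_nonneg) auto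
  fix x y :: real assume "x \<in> {0..1}" "y \<in> {0..1}" "x \<le> y"
  show "(\<Sum>k=0..Suc m. a k * x^k * (1-x)^(Suc m - k)) \<le> (\<Sum>k=0..Suc m. a k * y^k * (1-y)^(Suc m - k))"
  proof (rule DERIV_nonneg_imp_nondecreasing[where f="\<lambda>x. \<Sum>k=0..Suc m. a k * x^k * (1-x)^(Suc m - k)", OF \<open>x \<le> y\<close>])
    fix z assume "x \<le> z" "z \<le> y"
    then have "0 \<le> z" "z \<le> 1" using \<open>x \<in> {0..1}\<close> \<open>y \<in> {0..1}\<close> by auto
    then show "\<exists>d. ((\<lambda>x. \<Sum>k=0..Suc m. a k * x^k * (1-x)^(Suc m - k)) has_real_derivative d) (at z) \<and> 0 \<le> d"
      using der[of z] Dnn[of z] by blast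
  qed
qed


lemma coef:
  fixes f :: "real \<Rightarrow> real" and n :: nat
  assumes n: "0 < n" and k: "k < n"
    and mono: "mono_on {0..1} (\<lambda>x. f x - phi n x)"
  shows "real_of_int \<lfloor>f (real k / real n) * real (n choose k)\<rfloor> * real (n - k)
     \<le> real_of_int \<lfloor>f (real (Suc k) / real n) * real (n choose Suc k)\<rfloor> * real (Suc k)"
proof -
  define x where "x = f (real k / real n)"
  define y where "y = f (real (Suc k) / real n)"
  define C where "C = real (n choose k)"
  define C' where "C' = real (n choose Suc k)"
  have Cp: "C > 0" "C' > 0" unfolding C_def C'_def using k by auto
  have "f (real k / real n) - phi n (real k / real n) \<le> f (real (Suc k) / real n) - phi n (real (Suc k) / real n)"
    using k n by (intro mono_onD[OF mono]) (auto simp: field_simps)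
  then have yx: "y - x \<ge> 1 / C'" using phi_diff[OF n k] unfolding x_def y_def C'_def by linarith
  then have yx2: "(y - x) * C' \<ge> 1" using Cp by (simp add: field_simps)
  have N: "real (n - k) * C = real (Suc k) * C'"
  proof -
    have "(n - k) * (n choose k) = Suc k * (n choose Suc k)"
      using binomial_absorb_comp[of n k] times_binomial_minus1_eq[of "Suc k" n] by simp
    then show ?thesis unfolding C_def C'_def by (metis of_nat_mult)
  qed
  have a1: "real_of_int \<lfloor>x * C\<rfloor> \<le> x * C" by simp
  have a2: "y * C' < real_of_int \<lfloor>y * C'\<rfloor> + 1" using floor_eq_iff by blast
  have a2': "x * C' \<le> real_of_int \<lfloor>y * C'\<rfloor>" using a2 yx2 by (simp add: algebra_simps)
  have "real_of_int \<lfloor>x * C\<rfloor> * real (n - k) \<le> x * C * real (n - k)"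
    using a1 by (intro mult_right_mono) auto
  also have "\<dots> = x * (real (n - k) * C)" by (simp add: algebra_simps)
  also have "\<dots> = x * C' * real (Suc k)" unfolding N by (simp add: algebra_simps)
  also have "\<dots> \<le> real_of_int \<lfloor>y * C'\<rfloor> * real (Suc k)"
    using a2' by (intro mult_right_mono) auto
  finally show ?thesis unfolding x_def y_def C_def C'_def .
qed

theorem corollary2p3:
  fixes f :: "real \<Rightarrow> real" and n :: nat
  assumes "f 0 \<in> \<int>" and "f 1 \<in> \<int>"
    and "n \<ge> 3"
    and "mono_on {0..1} (\<lambda>x. f x - phi n x)"
  shows "mono_on {0..1} (Btilde n f)"
proof -
  obtain m where m: "n = Suc m" using assms(3) by (cases n) auto
  define a where "a k = real_of_int \<lfloor>f (real k / real n) * real (n choose k)\<rfloor>" for k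
  have B: "Btilde n f = (\<lambda>x. \<Sum>k=0..Suc m. a k * x^k * (1-x)^(Suc m - k))"
    unfolding Btilde_def a_def m by (rule ext) simp
  have "mono_on {0..1} (\<lambda>x. \<Sum>k=0..Suc m. a k * x^k * (1-x)^(Suc m - k))"
  proof (rule bern_mono)
    fix k assume "k \<le> m"
    then have "k < n" using m by simp
    from coef[OF _ this assms(4)] m show "a k * real (Suc m - k) \<le> a (Suc k) * real (Suc k)"
      unfolding a_def by simp
  qed
  then show ?thesis unfolding B .
qed

end
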